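(* Let $\mathcal G$ be a doubly connected molecular graph. Construct $\mathcal G_{new}$ from $\mathcal G$ as follows: add a new molecule $\mathcal M_{new}$; replace a diffusive edge $b_0$ of $\mathcal G$ joining molecules $\mathcal M_1$ and $\mathcal M_2$ by two diffusive edges, $b_1$ joining $\mathcal M_1$ and $\mathcal M_{new}$ and $b_2$ joining $\mathcal M_2$ and $\mathcal M_{new}$; and add a diffusive edge $b_3$ joining $\mathcal M_{new}$ and a molecule $\mathcal M_3$ of $\mathcal G$. If a blue solid edge is redundant in $\mathcal G$, then it is also redundant in $\mathcal G_{new}$.
   Context: A molecular graph is a finite multigraph whose vertices are called molecules and each of whose edges joins two distinct molecules and is either a diffusive edge or a blue solid edge (parallel edges are allowed). A molecular graph is doubly connected if there exist two disjoint sets of edges, $\mathcal B_{black}$ consisting only of diffusive edges and $\mathcal B_{blue}$ consisting only of blue solid or diffusive edges, such that each of $\mathcal B_{black}$ and $\mathcal B_{blue}$ contains a spanning tree of the set of all molecules. A blue solid edge $e$ of a doubly connected graph is redundant if the graph obtained by deleting $e$ is still doubly connected. *)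

theory Defs
  imports Main
begin

datatype edge_kind = Diffusive | BlueSolid

text \<open>A molecular graph: finite set V of molecules, finite set E of edges (of an abstract
  edge type, so parallel edges are allowed), each edge e joining the two distinct molecules
  fst (ends e) and snd (ends e), and having a kind.\<close>

definition molecular_graph :: "'v set \<Rightarrow> 'e set \<Rightarrow> ('e \<Rightarrow> 'v \<times> 'v) \<Rightarrow> bool" where
  "molecular_graph V E ends \<longleftrightarrow> finite V \<and> finite E \<and>
     (\<forall>e\<in>E. fst (ends e) \<in> V \<and> snd (ends e) \<in> V \<and> fst (ends e) \<noteq> snd (ends e))"

definition adj_rel :: "('e \<Rightarrow> 'v \<times> 'v) \<Rightarrow> 'e set \<Rightarrow> ('v \<times> 'v) set" where
  "adj_rel ends F = {(u, v). \<exists>e\<in>F. ends e = (u, v) \<or> ends e = (v, u)}"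

definition connects :: "'v set \<Rightarrow> ('e \<Rightarrow> 'v \<times> 'v) \<Rightarrow> 'e set \<Rightarrow> bool" where
  "connects V ends F \<longleftrightarrow> (\<forall>u\<in>V. \<forall>v\<in>V. (u, v) \<in> (adj_rel ends F)\<^sup>*)"

definition spanning_tree :: "'v set \<Rightarrow> ('e \<Rightarrow> 'v \<times> 'v) \<Rightarrow> 'e set \<Rightarrow> bool" where
  "spanning_tree V ends T \<longleftrightarrow> connects V ends T \<and> (\<forall>e\<in>T. \<not> connects V ends (T - {e}))"

definition contains_spanning_tree :: "'v set \<Rightarrow> ('e \<Rightarrow> 'v \<times> 'v) \<Rightarrow> 'e set \<Rightarrow> bool" where
  "contains_spanning_tree V ends B \<longleftrightarrow> (\<exists>T\<subseteq>B. spanning_tree V ends T)"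

definition doubly_connected ::
  "'v set \<Rightarrow> 'e set \<Rightarrow> ('e \<Rightarrow> 'v \<times> 'v) \<Rightarrow> ('e \<Rightarrow> edge_kind) \<Rightarrow> bool" where
  "doubly_connected V E ends kind \<longleftrightarrow>
     (\<exists>Bblack Bblue. Bblack \<subseteq> E \<and> Bblue \<subseteq> E \<and> Bblack \<inter> Bblue = {} \<and>
        (\<forall>e\<in>Bblack. kind e = Diffusive) \<and>
        (\<forall>e\<in>Bblue. kind e = BlueSolid \<or> kind e = Diffusive) \<and>
        contains_spanning_tree V ends Bblack \<and> contains_spanning_tree V ends Bblue)"

definition redundant ::
  "'v set \<Rightarrow> 'e set \<Rightarrow> ('e \<Rightarrow> 'v \<times> 'v) \<Rightarrow> ('e \<Rightarrow> edge_kind) \<Rightarrow> 'e \<Rightarrow> bool" where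
  "redundant V E ends kind e \<longleftrightarrow> e \<in> E \<and> kind e = BlueSolid \<and>
     doubly_connected V E ends kind \<and> doubly_connected V (E - {e}) ends kind"

end

theory Submission
  imports Defs
begin

lemma adj_mono: "A \<subseteq> B \<Longrightarrow> adj_rel ends A \<subseteq> adj_rel ends B"
  unfolding adj_rel_def by blast

lemma conn_mono: "connects V ends A \<Longrightarrow> A \<subseteq> B \<Longrightarrow> connects V ends B"
proof -
  assume c: "connects V ends A" and s: "A \<subseteq> B"
  have "(adj_rel ends A)\<^sup>* \<subseteq> (adj_rel ends B)\<^sup>*" by (rule rtrancl_mono[OF adj_mono[OF s]])
  then show ?thesis using c unfolding connects_def by blast
qed

lemma adj_cong: "\<forall>e\<in>A. ends' e = ends e \<Longrightarrow> adj_rel ends' A = adj_rel ends A"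
  unfolding adj_rel_def by auto

lemma cst_iff:
  assumes "finite B"
  shows "contains_spanning_tree V ends B \<longleftrightarrow> connects V ends B"
proof
  assume "contains_spanning_tree V ends B"
  then show "connects V ends B"
    unfolding contains_spanning_tree_def spanning_tree_def using conn_mono by blast
next
  assume c: "connects V ends B"
  let ?P = "\<lambda>T. T \<subseteq> B \<and> connects V ends T"
  have "?P B" using c by simp
  then obtain T where T: "?P T" and m: "\<forall>y. ?P y \<longrightarrow> card T \<le> card y"
    using ex_has_least_nat[of ?P B card] by blast
  have fT: "finite T" using T assms finite_subset by blast
  have "spanning_tree V ends T"
    unfolding spanning_tree_def
  proof (intro conjI ballI)
    show "connects V ends T" using T by simp
    fix e assume e: "e \<in> T"
    show "\<not> connects V ends (T - {e})"
    proof
      assume "connects V ends (T - {e})"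
      then have "card T \<le> card (T - {e})" using m T by blast
      moreover have "card (T - {e}) < card T" using fT e by (rule card_Diff1_less)
      ultimately show False by simp
    qed
  qed
  then show "contains_spanning_tree V ends B"
    unfolding contains_spanning_tree_def using T by blast
qed

lemma add_vertex:
  assumes c: "connects V ends A" and e: "e \<in> A" and x: "x \<in> V"
    and ee: "ends e = (w, x) \<or> ends e = (x, w)"
  shows "connects (insert w V) ends A"
  unfolding connects_def
proof (intro ballI)
  fix u v assume u: "u \<in> insert w V" and v: "v \<in> insert w V"
  have wx: "(w, x) \<in> adj_rel ends A" "(x, w) \<in> adj_rel ends A"
    using e ee unfolding adj_rel_def by blast+
  have cv: "\<forall>u\<in>V. \<forall>v\<in>V. (u, v) \<in> (adj_rel ends A)\<^sup>*" using c unfolding connects_def .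
  show "(u, v) \<in> (adj_rel ends A)\<^sup>*"
  proof (cases "u = w")
    case True
    show ?thesis
    proof (cases "v = w")
      case True with \<open>u = w\<close> show ?thesis by simp
    next
      case False
      then have "v \<in> V" using v by simp
      then have "(x, v) \<in> (adj_rel ends A)\<^sup>*" using cv x by blast
      then show ?thesis using wx \<open>u = w\<close> by (meson converse_rtrancl_into_rtrancl)
    qed
  next
    case False
    then have uV: "u \<in> V" using u by simp
    show ?thesis
    proof (cases "v = w")
      case True
      have "(u, x) \<in> (adj_rel ends A)\<^sup>*" using cv x uV by blast
      then show ?thesis using wx True by (meson rtrancl_into_rtrancl)
    next
      case False
      then show ?thesis using v uV cv by auto
    qed
  qed
qed

lemma replace_edge:
  assumes c: "connects V ends B" and b0: "b0 \<in> B" "ends b0 = (M1, M2)"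
    and "ends b1 = (M1, w)" "ends b2 = (M2, w)"
  shows "connects V ends ((B - {b0}) \<union> {b1, b2})"
proof -
  let ?B = "(B - {b0}) \<union> {b1, b2}"
  have "adj_rel ends B \<subseteq> (adj_rel ends ?B)\<^sup>*"
  proof
    fix p assume "p \<in> adj_rel ends B"
    then obtain u v e where p: "p = (u, v)" and e: "e \<in> B" "ends e = (u, v) \<or> ends e = (v, u)"
      unfolding adj_rel_def by blast
    show "p \<in> (adj_rel ends ?B)\<^sup>*"
    proof (cases "e = b0")
      case False
      then have "p \<in> adj_rel ends ?B" using e p unfolding adj_rel_def by blast
      then show ?thesis by blast
    next
      case True
      have a: "(M1, w) \<in> adj_rel ends ?B" "(w, M1) \<in> adj_rel ends ?B"
        "(M2, w) \<in> adj_rel ends ?B" "(w, M2) \<in> adj_rel ends ?B"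
        using assms unfolding adj_rel_def by blast+
      have "(M1, M2) \<in> (adj_rel ends ?B)\<^sup>*" "(M2, M1) \<in> (adj_rel ends ?B)\<^sup>*"
        using a by (meson r_into_rtrancl rtrancl_trans)+
      then show ?thesis using True e p b0 by auto
    qed
  qed
  then have "(adj_rel ends B)\<^sup>* \<subseteq> (adj_rel ends ?B)\<^sup>*" by (rule rtrancl_subset_rtrancl)
  then show ?thesis using c unfolding connects_def by blast
qed

lemma transfer_conn:
  assumes c: "connects V ends B" and BE: "B \<subseteq> E"
    and same: "\<forall>e\<in>E. ends' e = ends e"
  shows "connects V ends' B"
proof -
  have "adj_rel ends' B = adj_rel ends B" using same BE by (intro adj_cong) blast
  then show ?thesis using c unfolding connects_def by simp
qed

lemma new_conn:
  assumes c: "connects V ends B" and BE: "B \<subseteq> E"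
    and same: "\<forall>e\<in>E. ends' e = ends e"
    and M1: "M1 \<in> V" and M3: "M3 \<in> V"
    and e1: "ends' b1 = (M1, w)" and e2: "ends' b2 = (M2, w)" and e3: "ends' b3 = (w, M3)"
    and b0e: "ends b0 = (M1, M2)" "b0 \<in> E"
  shows "b0 \<in> B \<Longrightarrow> connects (insert w V) ends' ((B - {b0}) \<union> {b1, b2})"
    and "connects (insert w V) ends' (insert b3 B)"
    and "connects (insert w V) ends' (insert b1 B)"
proof -
  have c': "connects V ends' B" using transfer_conn[OF c BE same] .
  have b0': "ends' b0 = (M1, M2)" using same b0e by simp
  show "b0 \<in> B \<Longrightarrow> connects (insert w V) ends' ((B - {b0}) \<union> {b1, b2})"
  proof -
    assume "b0 \<in> B"
    then have "connects V ends' ((B - {b0}) \<union> {b1, b2})"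
      using replace_edge[OF c' _ b0' e1 e2] by blast
    then show ?thesis by (rule add_vertex[where e=b1 and x=M1]) (use M1 e1 in auto)
  qed
  show "connects (insert w V) ends' (insert b3 B)"
    by (rule add_vertex[where e=b3 and x=M3], rule conn_mono[OF c']) (use M3 e3 in auto)
  show "connects (insert w V) ends' (insert b1 B)"
    by (rule add_vertex[where e=b1 and x=M1], rule conn_mono[OF c']) (use M1 e1 in auto)
qed

lemma dc_transfer:
  assumes mol: "molecular_graph V E ends"
    and FE: "F \<subseteq> E" and b0F: "b0 \<in> F"
    and dc: "doubly_connected V F ends kind"
    and b0: "kind b0 = Diffusive" "ends b0 = (M1, M2)"
    and M3: "M3 \<in> V"
    and nb: "b1 \<notin> E" "b2 \<notin> E" "b3 \<notin> E" "b1 \<noteq> b2" "b1 \<noteq> b3" "b2 \<noteq> b3"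
    and ends'_def: "ends' = ends(b1 := (M1, w), b2 := (M2, w), b3 := (w, M3))"
    and kind'_def: "kind' = kind(b1 := Diffusive, b2 := Diffusive, b3 := Diffusive)"
  shows "doubly_connected (insert w V) ((F - {b0}) \<union> {b1, b2, b3}) ends' kind'"
proof -
  have fE: "finite E" using mol unfolding molecular_graph_def by simp
  have b0E: "b0 \<in> E" using FE b0F by blast
  have M1: "M1 \<in> V" using mol b0E b0 unfolding molecular_graph_def by force
  have same: "\<forall>e\<in>E. ends' e = ends e" using nb ends'_def by auto
  have ksame: "\<forall>e\<in>E. kind' e = kind e" using nb kind'_def by auto
  have e1: "ends' b1 = (M1, w)" and e2: "ends' b2 = (M2, w)" and e3: "ends' b3 = (w, M3)"
    using nb ends'_def by auto
  have k123: "kind' b1 = Diffusive" "kind' b2 = Diffusive" "kind' b3 = Diffusive"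
    using kind'_def by auto
  obtain Bk Bb where Bk: "Bk \<subseteq> F" and Bb: "Bb \<subseteq> F" and dj: "Bk \<inter> Bb = {}"
    and kk: "\<forall>e\<in>Bk. kind e = Diffusive"
    and kb: "\<forall>e\<in>Bb. kind e = BlueSolid \<or> kind e = Diffusive"
    and ck: "contains_spanning_tree V ends Bk" and cb: "contains_spanning_tree V ends Bb"
    using dc unfolding doubly_connected_def by blast
  have fk: "finite Bk" "finite Bb"
    using finite_subset[OF subset_trans[OF Bk FE] fE] finite_subset[OF subset_trans[OF Bb FE] fE] .
  have ck': "connects V ends Bk" using cst_iff[OF fk(1)] ck by blast
  have cb': "connects V ends Bb" using cst_iff[OF fk(2)] cb by blast
  have BkE: "Bk \<subseteq> E" and BbE: "Bb \<subseteq> E" using Bk Bb FE by blast+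
  have kk': "\<forall>e\<in>Bk. kind' e = Diffusive" using kk ksame BkE by (metis subsetD)
  have kb': "\<forall>e\<in>Bb. kind' e = BlueSolid \<or> kind' e = Diffusive" using kb ksame BbE by (metis subsetD)
  note nk = new_conn[OF ck' BkE same M1 M3 e1 e2 e3 b0(2) b0E]
  note nbl = new_conn[OF cb' BbE same M1 M3 e1 e2 e3 b0(2) b0E]
  let ?F' = "(F - {b0}) \<union> {b1, b2, b3}"
  have fF: "finite ?F'" using finite_subset[OF FE fE] by simp
  have fin: "\<And>X. X \<subseteq> ?F' \<Longrightarrow> finite X" using fF finite_subset by auto
  have nbF: "b1 \<notin> F" "b2 \<notin> F" "b3 \<notin> F" using nb FE by blast+
  show ?thesis
  proof (cases "b0 \<in> Bk")
    case True
    then have b0b: "b0 \<notin> Bb" using dj by blast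
    let ?K = "(Bk - {b0}) \<union> {b1, b2}" and ?L = "insert b3 Bb"
    have s: "?K \<subseteq> ?F'" "?L \<subseteq> ?F'" using Bk Bb b0b by auto
    show ?thesis unfolding doubly_connected_def
      apply (rule exI[of _ ?K], rule exI[of _ ?L])
      apply (intro conjI)
      using s apply blast
      using s apply blast
      using dj nbF True Bk Bb nb apply blast
      using kk' k123 apply auto[1]
      using kb' k123 apply auto[1]
      using cst_iff[OF fin[OF s(1)]] nk(1)[OF True] apply blast
      using cst_iff[OF fin[OF s(2)]] nbl(2) apply blast
      done
  next
    case False
    note nk0 = False
    show ?thesis
    proof (cases "b0 \<in> Bb")
      case True
      let ?K = "insert b3 Bk" and ?L = "(Bb - {b0}) \<union> {b1, b2}"
      have s: "?K \<subseteq> ?F'" "?L \<subseteq> ?F'" using Bk Bb nk0 by auto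
      show ?thesis unfolding doubly_connected_def
        apply (rule exI[of _ ?K], rule exI[of _ ?L])
        apply (intro conjI)
        using s apply blast
        using s apply blast
        using dj nbF True Bk Bb nb apply blast
        using kk' k123 apply auto[1]
        using kb' k123 apply auto[1]
        using cst_iff[OF fin[OF s(1)]] nk(2) apply blast
        using cst_iff[OF fin[OF s(2)]] nbl(1)[OF True] apply blast
        done
    next
      case False
      let ?K = "insert b3 Bk" and ?L = "insert b1 Bb"
      have s: "?K \<subseteq> ?F'" "?L \<subseteq> ?F'" using Bk Bb nk0 False by auto
      show ?thesis unfolding doubly_connected_def
        apply (rule exI[of _ ?K], rule exI[of _ ?L])
        apply (intro conjI)
        using s apply blast
        using s apply blast
        using dj nbF Bk Bb nb apply blast
        using kk' k123 apply auto[1]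
        using kb' k123 apply auto[1]
        using cst_iff[OF fin[OF s(1)]] nk(2) apply blast
        using cst_iff[OF fin[OF s(2)]] nbl(3) apply blast
        done
    qed
  qed
qed

theorem claimA7:
  fixes V :: "'v set" and E :: "'e set" and ends :: "'e \<Rightarrow> 'v \<times> 'v"
    and kind :: "'e \<Rightarrow> edge_kind"
    and Mnew M1 M2 M3 :: 'v and b0 b1 b2 b3 b :: 'e
  assumes mol: "molecular_graph V E ends"
    and dc: "doubly_connected V E ends kind"
    and new_mol: "Mnew \<notin> V"
    and b0: "b0 \<in> E" "kind b0 = Diffusive" "ends b0 = (M1, M2)"
    and M3: "M3 \<in> V"
    and new_edges: "b1 \<notin> E" "b2 \<notin> E" "b3 \<notin> E" "b1 \<noteq> b2" "b1 \<noteq> b3" "b2 \<noteq> b3"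
    and red: "redundant V E ends kind b"
  shows "redundant (insert Mnew V) ((E - {b0}) \<union> {b1, b2, b3})
           (ends(b1 := (M1, Mnew), b2 := (M2, Mnew), b3 := (Mnew, M3)))
           (kind(b1 := Diffusive, b2 := Diffusive, b3 := Diffusive)) b"
proof -
  have bE: "b \<in> E" and kb: "kind b = BlueSolid" and dc2: "doubly_connected V (E - {b}) ends kind"
    using red unfolding redundant_def by auto
  have bne: "b \<noteq> b0" "b \<noteq> b1" "b \<noteq> b2" "b \<noteq> b3" using bE kb b0 new_edges by auto
  have d1: "doubly_connected (insert Mnew V) ((E - {b0}) \<union> {b1, b2, b3})
           (ends(b1 := (M1, Mnew), b2 := (M2, Mnew), b3 := (Mnew, M3)))
           (kind(b1 := Diffusive, b2 := Diffusive, b3 := Diffusive))"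
    by (rule dc_transfer[OF mol subset_refl b0(1) dc b0(2,3) M3 new_edges refl refl])
  have d2: "doubly_connected (insert Mnew V) (((E - {b}) - {b0}) \<union> {b1, b2, b3})
           (ends(b1 := (M1, Mnew), b2 := (M2, Mnew), b3 := (Mnew, M3)))
           (kind(b1 := Diffusive, b2 := Diffusive, b3 := Diffusive))"
    by (rule dc_transfer[OF mol _ _ dc2 b0(2,3) M3 new_edges refl refl]) (use b0 bne in auto)
  have eq: "((E - {b}) - {b0}) \<union> {b1, b2, b3} = ((E - {b0}) \<union> {b1, b2, b3}) - {b}"
    using bne by auto
  show ?thesis unfolding redundant_def using d1 d2 eq bE bne kb by auto
qed

end
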